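(* For each $n$, consider the distributed system (under the RJSQ policy) and its minimum-delay service pool (MDSP), as described in the context, both initially empty. Then the process \[ \Gamma^\dagger_n(t)=\big(W_n(t)+U_n(t)\big)-\big(W^\dagger_n(t)+U^\dagger_n(t)\big),\quad t\ge0, \] has continuous, piecewise linear sample paths, and $\Gamma^\dagger_n(t)\ge0$ for all $t\ge0$.
   Context: Distributed system $n$: $s\ge2$ stations with single work-conserving FCFS servers, unlimited waiting room, service rates $0<\mu_1\le\cdots\le\mu_s$, $\mu=\sum_k\mu_k$. Customer $j$ appears at time $a_n(j)=\sum_{i\le j}z(i)/\lambda_n$ ($z(i)$ i.i.d. nonnegative, mean 1); it comes from origin $m\in\{1,\ldots,b\}$ with probability $p_m>0$ (i.i.d. across customers), in which case its traveling delay to station $k$ is $\sqrt n d_{m,k}$, $d_{m,k}\ge0$. It is routed by the randomized join-the-shortest-queue (RJSQ) policy to a destination $\xi_n(j)$ and arrives there at time $a_n(j)+\sqrt n d_{m,\xi_n(j)}$. The $i$th customer arriving at (served by) station $k$ has service requirement $w_k(i)$ (i.i.d. nonnegative, mean 1) and service time $w_k(i)/\mu_k$. $W_n(t)=\sum_kW_{n,k}(t)$, where $W_{n,k}(t)$ is the total unfinished service requirement (remaining service time times $\mu_k$) of customers present at station $k$; $U_n(t)$ (en route workload) is the total service requirement of customers that have appeared by time $t$ but not yet arrived at their stations. MDSP $n$: a single station with one work-conserving FCFS server of rate $\mu$ and unlimited waiting room. For each customer $j$ of distributed system $n$, from origin $m$ and sent to station $k$, there is a class-$k$ counterpart that appears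 at $a_n(j)$, arrives at the MDSP station at time $a_n(j)+\sqrt n\,\underline d_m$ with $\underline d_m=\min_\ell d_{m,\ell}$, and has the same service requirement (service time requirement$/\mu$). $W^\dagger_n(t)$ is the total unfinished service requirement at the MDSP station and $U^\dagger_n(t)$ the total service requirement of counterparts that have appeared but not yet arrived. *)

theory Defs
  imports "HOL-Analysis.Analysis"
begin

text \<open>Pathwise (sample-path) model. Customers are indexed by j \<ge> 1.\<close>

definition appear :: "real \<Rightarrow> (nat \<Rightarrow> real) \<Rightarrow> nat \<Rightarrow> real" where
  "appear lam z j = (\<Sum>i\<in>{1..j}. z i) / lam"

definition dmin :: "nat \<Rightarrow> (nat \<Rightarrow> nat \<Rightarrow> real) \<Rightarrow> nat \<Rightarrow> real" where
  "dmin s d m = Min ((\<lambda>l. d m l) ` {1..s})"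

definition dist_arr :: "nat \<Rightarrow> real \<Rightarrow> (nat \<Rightarrow> real) \<Rightarrow> (nat \<Rightarrow> nat \<Rightarrow> real)
    \<Rightarrow> (nat \<Rightarrow> nat) \<Rightarrow> (nat \<Rightarrow> nat) \<Rightarrow> nat \<Rightarrow> real" where
  "dist_arr n lam z d orig xi j = appear lam z j + sqrt (real n) * d (orig j) (xi j)"

definition mdsp_arr :: "nat \<Rightarrow> nat \<Rightarrow> real \<Rightarrow> (nat \<Rightarrow> real) \<Rightarrow> (nat \<Rightarrow> nat \<Rightarrow> real)
    \<Rightarrow> (nat \<Rightarrow> nat) \<Rightarrow> nat \<Rightarrow> real" where
  "mdsp_arr n s lam z d orig j = appear lam z j + sqrt (real n) * dmin s d (orig j)"

text \<open>Unfinished service requirement at time t \<ge> 0 of a single work-conserving server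
  working at rate r, initially empty, fed by the customers j \<ge> 1 with sel j, customer j
  arriving at time arr j with service requirement v j (Lindley / Skorokhod representation
  of the workload of a work-conserving server).\<close>
definition workload :: "real \<Rightarrow> (nat \<Rightarrow> bool) \<Rightarrow> (nat \<Rightarrow> real) \<Rightarrow> (nat \<Rightarrow> real) \<Rightarrow> real \<Rightarrow> real" where
  "workload r sel arr v t =
     (SUP u\<in>{0..t}. (\<Sum>j\<in>{j. 1 \<le> j \<and> sel j \<and> u \<le> arr j \<and> arr j \<le> t}. v j) - r * (t - u))"

definition enroute :: "(nat \<Rightarrow> real) \<Rightarrow> (nat \<Rightarrow> real) \<Rightarrow> (nat \<Rightarrow> real) \<Rightarrow> real \<Rightarrow> real" where
  "enroute a arr v t = (\<Sum>j\<in>{j. 1 \<le> j \<and> a j \<le> t \<and> t < arr j}. v j)"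

definition W_dist :: "nat \<Rightarrow> nat \<Rightarrow> real \<Rightarrow> (nat \<Rightarrow> real) \<Rightarrow> (nat \<Rightarrow> real)
    \<Rightarrow> (nat \<Rightarrow> nat \<Rightarrow> real) \<Rightarrow> (nat \<Rightarrow> nat) \<Rightarrow> (nat \<Rightarrow> nat) \<Rightarrow> (nat \<Rightarrow> real) \<Rightarrow> real \<Rightarrow> real" where
  "W_dist n s lam mu z d orig xi v t =
     (\<Sum>k\<in>{1..s}. workload (mu k) (\<lambda>j. xi j = k) (dist_arr n lam z d orig xi) v t)"

definition U_dist :: "nat \<Rightarrow> real \<Rightarrow> (nat \<Rightarrow> real) \<Rightarrow> (nat \<Rightarrow> nat \<Rightarrow> real)
    \<Rightarrow> (nat \<Rightarrow> nat) \<Rightarrow> (nat \<Rightarrow> nat) \<Rightarrow> (nat \<Rightarrow> real) \<Rightarrow> real \<Rightarrow> real" where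
  "U_dist n lam z d orig xi v t = enroute (appear lam z) (dist_arr n lam z d orig xi) v t"

definition W_mdsp :: "nat \<Rightarrow> nat \<Rightarrow> real \<Rightarrow> (nat \<Rightarrow> real) \<Rightarrow> (nat \<Rightarrow> real)
    \<Rightarrow> (nat \<Rightarrow> nat \<Rightarrow> real) \<Rightarrow> (nat \<Rightarrow> nat) \<Rightarrow> (nat \<Rightarrow> real) \<Rightarrow> real \<Rightarrow> real" where
  "W_mdsp n s lam mu z d orig v t =
     workload (\<Sum>k\<in>{1..s}. mu k) (\<lambda>j. True) (mdsp_arr n s lam z d orig) v t"

definition U_mdsp :: "nat \<Rightarrow> nat \<Rightarrow> real \<Rightarrow> (nat \<Rightarrow> real) \<Rightarrow> (nat \<Rightarrow> nat \<Rightarrow> real)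
    \<Rightarrow> (nat \<Rightarrow> nat) \<Rightarrow> (nat \<Rightarrow> real) \<Rightarrow> real \<Rightarrow> real" where
  "U_mdsp n s lam z d orig v t = enroute (appear lam z) (mdsp_arr n s lam z d orig) v t"

definition Gamma :: "nat \<Rightarrow> nat \<Rightarrow> real \<Rightarrow> (nat \<Rightarrow> real) \<Rightarrow> (nat \<Rightarrow> real)
    \<Rightarrow> (nat \<Rightarrow> nat \<Rightarrow> real) \<Rightarrow> (nat \<Rightarrow> nat) \<Rightarrow> (nat \<Rightarrow> nat) \<Rightarrow> (nat \<Rightarrow> real) \<Rightarrow> real \<Rightarrow> real" where
  "Gamma n s lam mu z d orig xi v t =
     (W_dist n s lam mu z d orig xi v t + U_dist n lam z d orig xi v t)
     - (W_mdsp n s lam mu z d orig v t + U_mdsp n s lam z d orig v t)"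

definition piecewise_linear_nonneg :: "(real \<Rightarrow> real) \<Rightarrow> bool" where
  "piecewise_linear_nonneg f \<longleftrightarrow>
     (\<forall>T>0. \<exists>ts::real list. ts \<noteq> [] \<and> sorted_wrt (<) ts \<and> hd ts = 0 \<and> last ts = T \<and>
        (\<forall>i < length ts - 1. \<exists>\<alpha> \<beta>. \<forall>x\<in>{ts ! i .. ts ! Suc i}. f x = \<alpha> * x + \<beta>))"

end

theory Submission
  imports Defs
begin


definition Fa :: "(nat \<Rightarrow> bool) \<Rightarrow> (nat \<Rightarrow> real) \<Rightarrow> (nat \<Rightarrow> real) \<Rightarrow> real \<Rightarrow> real" where
  "Fa sel arr v u = (\<Sum>j\<in>{j. 1 \<le> j \<and> sel j \<and> arr j < u}. v j)"
definition Aa :: "(nat \<Rightarrow> bool) \<Rightarrow> (nat \<Rightarrow> real) \<Rightarrow> (nat \<Rightarrow> real) \<Rightarrow> real \<Rightarrow> real" where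
  "Aa sel arr v u = (\<Sum>j\<in>{j. 1 \<le> j \<and> sel j \<and> arr j \<le> u}. v j)"
definition Kf :: "real \<Rightarrow> (nat \<Rightarrow> bool) \<Rightarrow> (nat \<Rightarrow> real) \<Rightarrow> (nat \<Rightarrow> real) \<Rightarrow> real \<Rightarrow> real" where
  "Kf r sel arr v t = (SUP u\<in>{0..t}. r * u - Fa sel arr v u)"

lemma SUP_add_const:
  fixes g :: "real \<Rightarrow> real"
  assumes "A \<noteq> {}" "bdd_above (g ` A)"
  shows "(SUP u\<in>A. c + g u) = c + (SUP u\<in>A. g u)"
proof (rule antisym)
  show "(SUP u\<in>A. c + g u) \<le> c + (SUP u\<in>A. g u)"
    using assms by (intro cSUP_least) (auto intro: cSUP_upper)
  have bdd: "bdd_above ((\<lambda>u. c + g u) ` A)"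
    using assms(2) by (auto simp: bdd_above_def) (metis add_le_cancel_left)
  have "(SUP u\<in>A. g u) \<le> (SUP u\<in>A. c + g u) - c"
    using assms bdd by (intro cSUP_least) (auto intro: cSUP_upper2 simp: algebra_simps)
  then show "c + (SUP u\<in>A. g u) \<le> (SUP u\<in>A. c + g u)" by simp
qed

definition LA :: "(real \<Rightarrow> real) \<Rightarrow> real set \<Rightarrow> real \<Rightarrow> bool" where
  "LA f S T \<longleftrightarrow> finite S \<and> (\<forall>t\<in>{0<..<T} - S. \<exists>\<delta>>0. \<exists>\<alpha> \<beta>. \<forall>t'. \<bar>t' - t\<bar> < \<delta> \<longrightarrow> f t' = \<alpha> * t' + \<beta>)"

locale arrs =
  fixes r :: real and sel :: "nat \<Rightarrow> bool" and arr v :: "nat \<Rightarrow> real"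
  assumes r: "r > 0" and vnn: "\<And>j. v j \<ge> 0"
    and fin: "\<And>t. finite {j. 1 \<le> j \<and> sel j \<and> arr j \<le> t}"
begin

abbreviation "F \<equiv> Fa sel arr v"
abbreviation "A \<equiv> Aa sel arr v"
abbreviation "K \<equiv> Kf r sel arr v"

lemma finl: "finite {j. 1 \<le> j \<and> sel j \<and> arr j < t}"
  by (rule finite_subset[OF _ fin[of t]]) auto

lemma F_nonneg: "F u \<ge> 0"
  unfolding Fa_def by (intro sum_nonneg vnn)

lemma F_mono: "u1 \<le> u2 \<Longrightarrow> F u1 \<le> F u2"
  unfolding Fa_def by (intro sum_mono2 finl vnn) auto

lemma F_le_A: "F u \<le> A u"
  unfolding Fa_def Aa_def by (intro sum_mono2 fin vnn) auto

lemma A_le_F: "u1 < u2 \<Longrightarrow> A u1 \<le> F u2"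
  unfolding Fa_def Aa_def by (intro sum_mono2 finl vnn) auto

lemma bdd: "t \<ge> 0 \<Longrightarrow> bdd_above ((\<lambda>u. r * u - F u) ` {0..t})"
proof -
  have "r * u - F u \<le> r * t" if "u \<in> {0..t}" for u
  proof -
    have "r * u \<le> r * t" using that r by (auto intro: mult_left_mono)
    then show ?thesis using F_nonneg[of u] by linarith
  qed
  then show ?thesis by (intro bdd_aboveI2) auto
qed

lemma K_lower: "u \<in> {0..t} \<Longrightarrow> r * u - F u \<le> K t"
  unfolding Kf_def by (rule cSUP_upper) (auto intro: bdd)

lemma K_lip: assumes "0 \<le> t1" "t1 \<le> t2"
  shows "K t1 \<le> K t2" "K t2 \<le> K t1 + r * (t2 - t1)"
proof -
  show "K t1 \<le> K t2"
    unfolding Kf_def[of _ _ _ _ t1] using assms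
    by (intro cSUP_least) (auto intro: K_lower)
  show "K t2 \<le> K t1 + r * (t2 - t1)"
    unfolding Kf_def[of _ _ _ _ t2]
  proof (rule cSUP_least)
    show "{0..t2} \<noteq> {}" using assms by auto
    fix u assume u: "u \<in> {0..t2}"
    show "r * u - F u \<le> K t1 + r * (t2 - t1)"
    proof (cases "u \<le> t1")
      case True
      then have "r * u - F u \<le> K t1" using u by (intro K_lower) auto
      moreover have "r * (t2 - t1) \<ge> 0" using r assms by auto
      ultimately show ?thesis by linarith
    next
      case False
      then have "F t1 \<le> F u" by (intro F_mono) auto
      moreover have "r * t1 - F t1 \<le> K t1" using assms by (intro K_lower) auto
      moreover have "r * u \<le> r * t2" using u r by auto
      ultimately show ?thesis by (simp add: algebra_simps)
    qed
  qed
qed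

lemma K_cont: "continuous_on {0..} K"
proof (rule lipschitz_on_continuous_on)
  show "r-lipschitz_on {0..} K"
  proof (rule lipschitz_onI)
    fix x y :: real assume xy: "x \<in> {0..}" "y \<in> {0..}"
    show "dist (K x) (K y) \<le> r * dist x y"
    proof (cases "x \<le> y")
      case True
      then show ?thesis using K_lip[of x y] xy by (auto simp: dist_real_def)
    next
      case False
      then show ?thesis using K_lip[of y x] xy by (auto simp: dist_real_def)
    qed
  qed (use r in auto)
qed

lemma workload_eq:
  assumes "t \<ge> 0"
  shows "workload r sel arr v t = A t - r * t + K t"
proof -
  have "(\<Sum>j\<in>{j. 1 \<le> j \<and> sel j \<and> u \<le> arr j \<and> arr j \<le> t}. v j) - r * (t - u)
      = (A t - r * t) + (r * u - F u)" if "u \<in> {0..t}" for u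
  proof -
    have "{j. 1 \<le> j \<and> sel j \<and> u \<le> arr j \<and> arr j \<le> t} =
        {j. 1 \<le> j \<and> sel j \<and> arr j \<le> t} - {j. 1 \<le> j \<and> sel j \<and> arr j < u}"
      by auto
    moreover have "{j. 1 \<le> j \<and> sel j \<and> arr j < u} \<subseteq> {j. 1 \<le> j \<and> sel j \<and> arr j \<le> t}"
      using that by auto
    ultimately have "(\<Sum>j\<in>{j. 1 \<le> j \<and> sel j \<and> u \<le> arr j \<and> arr j \<le> t}. v j) = A t - F u"
      unfolding Aa_def Fa_def by (simp only: sum_diff[OF fin])
    then show ?thesis by (simp add: algebra_simps)
  qed
  then have "workload r sel arr v t = (SUP u\<in>{0..t}. (A t - r * t) + (r * u - F u))"
    unfolding workload_def by (intro SUP_cong) auto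
  also have "\<dots> = (A t - r * t) + K t"
    unfolding Kf_def using assms by (intro SUP_add_const bdd) auto
  finally show ?thesis .
qed

lemma K_interval:
  assumes x: "0 \<le> x" "x < t'" and FA: "F t' = A x"
    and Fc: "\<And>u. x < u \<Longrightarrow> u \<le> t' \<Longrightarrow> F u = A x"
  shows "K t' = max (K x) (r * t' - A x)"
proof (rule antisym)
  have "K x \<le> K t'" using K_lip x by auto
  moreover have "r * t' - A x \<le> K t'" using K_lower[of t' t'] FA x by auto
  ultimately show "max (K x) (r * t' - A x) \<le> K t'" by auto
  show "K t' \<le> max (K x) (r * t' - A x)"
    unfolding Kf_def[of _ _ _ _ t']
  proof (rule cSUP_least)
    show "{0..t'} \<noteq> {}" using x by auto
    fix u assume u: "u \<in> {0..t'}"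
    show "r * u - F u \<le> max (K x) (r * t' - A x)"
    proof (cases "u \<le> x")
      case True
      then show ?thesis using K_lower[of u x] u by auto
    next
      case False
      then have "F u = A x" using u Fc by auto
      moreover have "r * u \<le> r * t'" using u r by auto
      ultimately show ?thesis by auto
    qed
  qed
qed

lemma K_LA:
  assumes T: "T > 0"
  shows "\<exists>S. LA K S T"
proof -
  define P where "P = arr ` {j. 1 \<le> j \<and> sel j \<and> arr j \<le> T}"
  define p where "p x = (K x + A x) / r" for x
  define S where "S = insert 0 (P \<union> p ` insert 0 P)"
  have finP: "finite P" unfolding P_def using fin by auto
  have "finite S" unfolding S_def using finP by auto
  moreover have "\<exists>\<delta>>0. \<exists>\<alpha> \<beta>. \<forall>t'. \<bar>t' - t\<bar> < \<delta> \<longrightarrow> K t' = \<alpha> * t' + \<beta>"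
    if t: "t \<in> {0<..<T} - S" for t
  proof -
    define X where "X = insert 0 {a\<in>P. a < t}"
    define Y where "Y = insert T {a\<in>P. t < a}"
    define x where "x = Max X"
    define y where "y = Min Y"
    have finX: "finite X" "X \<noteq> {}" unfolding X_def using finP by auto
    have finY: "finite Y" "Y \<noteq> {}" unfolding Y_def using finP by auto
    have tP: "t \<notin> P" "t > 0" "t < T"
      using t unfolding S_def by auto
    have "x \<in> X" unfolding x_def using finX by (rule Max_in)
    then have xt: "x < t" and xP: "x \<in> insert 0 P" using tP unfolding X_def by auto
    have x0: "0 \<le> x" unfolding x_def using finX by (intro Max_ge) (auto simp: X_def)
    have "y \<in> Y" unfolding y_def using finY by (rule Min_in)
    then have ty: "t < y" using tP unfolding Y_def by auto
    have yT: "y \<le> T" unfolding y_def using finY by (intro Min_le) (auto simp: Y_def)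
    have tpx: "t \<noteq> p x"
    proof
      assume "t = p x"
      then have "t \<in> p ` insert 0 P" using xP by blast
      then show False using t unfolding S_def by blast
    qed
    have Fc: "F u = A x" if u: "x < u" "u < y" for u
    proof -
      have "{j. 1 \<le> j \<and> sel j \<and> arr j < u} = {j. 1 \<le> j \<and> sel j \<and> arr j \<le> x}"
      proof (intro set_eqI iffI)
        fix j assume j: "j \<in> {j. 1 \<le> j \<and> sel j \<and> arr j < u}"
        have aP: "arr j \<in> P" using j u yT unfolding P_def by auto
        show "j \<in> {j. 1 \<le> j \<and> sel j \<and> arr j \<le> x}"
        proof (cases "arr j < t")
          case True
          then have "arr j \<in> X" using aP unfolding X_def by auto
          then have "arr j \<le> x" unfolding x_def using finX by auto
          then show ?thesis using j by auto
        next
          case False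
          then have "t < arr j" using aP tP by (cases "arr j = t") auto
          then have "arr j \<in> Y" using aP unfolding Y_def by auto
          then have "y \<le> arr j" unfolding y_def using finY by auto
          then show ?thesis using j u by auto
        qed
      qed (use u in auto)
      then show ?thesis unfolding Fa_def Aa_def by simp
    qed
    have Keq: "K t' = max (K x) (r * t' - A x)" if "x < t'" "t' < y" for t'
      using that x0 Fc by (intro K_interval) auto
    define \<delta> where "\<delta> = min (t - x) (min (y - t) \<bar>t - p x\<bar>)"
    have \<delta>: "\<delta> > 0" unfolding \<delta>_def using xt ty tpx by auto
    have iff: "r * t' - A x > K x \<longleftrightarrow> t' > p x" for t'
      unfolding p_def using r by (simp add: field_simps)
    show ?thesis
    proof (cases "t > p x")
      case True
      have "K t' = r * t' + (- A x)" if "\<bar>t' - t\<bar> < \<delta>" for t'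
      proof -
        have "x < t'" "t' < y" "t' > p x" using that True unfolding \<delta>_def by auto
        then show ?thesis using Keq iff by auto
      qed
      then show ?thesis using \<delta> by blast
    next
      case False
      have "K t' = 0 * t' + K x" if "\<bar>t' - t\<bar> < \<delta>" for t'
      proof -
        have "x < t'" "t' < y" "\<not> t' > p x" using that False tpx unfolding \<delta>_def by auto
        then show ?thesis using Keq iff[of t'] by auto
      qed
      then show ?thesis using \<delta> by blast
    qed
  qed
  ultimately show ?thesis unfolding LA_def by blast
qed

end


lemma LA_add:
  assumes "LA f S1 T" "LA g S2 T"
  shows "LA (\<lambda>t. f t + g t) (S1 \<union> S2) T"
  unfolding LA_def
proof (intro conjI ballI)
  show "finite (S1 \<union> S2)" using assms unfolding LA_def by auto
  fix t assume t: "t \<in> {0<..<T} - (S1 \<union> S2)"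
  obtain d1 a1 b1 where 1: "d1 > 0" "\<forall>t'. \<bar>t' - t\<bar> < d1 \<longrightarrow> f t' = a1 * t' + b1"
    using assms(1) t unfolding LA_def by blast
  obtain d2 a2 b2 where 2: "d2 > 0" "\<forall>t'. \<bar>t' - t\<bar> < d2 \<longrightarrow> g t' = a2 * t' + b2"
    using assms(2) t unfolding LA_def by blast
  have "\<forall>t'. \<bar>t' - t\<bar> < min d1 d2 \<longrightarrow> f t' + g t' = (a1 + a2) * t' + (b1 + b2)"
    using 1 2 by (auto simp: algebra_simps)
  then show "\<exists>\<delta>>0. \<exists>\<alpha> \<beta>. \<forall>t'. \<bar>t' - t\<bar> < \<delta> \<longrightarrow> f t' + g t' = \<alpha> * t' + \<beta>"
    using 1(1) 2(1) by (metis min_less_iff_conj)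
qed

lemma LA_neg:
  assumes "LA f S T"
  shows "LA (\<lambda>t. - f t) S T"
  unfolding LA_def
proof (intro conjI ballI)
  show "finite S" using assms unfolding LA_def by auto
  fix t assume t: "t \<in> {0<..<T} - S"
  obtain d1 a1 b1 where 1: "d1 > 0" "\<forall>t'. \<bar>t' - t\<bar> < d1 \<longrightarrow> f t' = a1 * t' + b1"
    using assms(1) t unfolding LA_def by blast
  have "\<forall>t'. \<bar>t' - t\<bar> < d1 \<longrightarrow> - f t' = (- a1) * t' + (- b1)"
    using 1 by auto
  then show "\<exists>\<delta>>0. \<exists>\<alpha> \<beta>. \<forall>t'. \<bar>t' - t\<bar> < \<delta> \<longrightarrow> - f t' = \<alpha> * t' + \<beta>"
    using 1 by blast
qed

lemma LA_sum:
  assumes "finite I" "\<And>k. k \<in> I \<Longrightarrow> \<exists>S. LA (f k) S T"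
  shows "\<exists>S. LA (\<lambda>t. \<Sum>k\<in>I. f k t) S T"
  using assms
proof (induction I rule: finite_induct)
  case empty
  have "\<exists>\<delta>>0. \<exists>\<alpha> \<beta>. \<forall>t'. \<bar>t' - t\<bar> < \<delta> \<longrightarrow> (0::real) = \<alpha> * t' + \<beta>" for t :: real
    by (rule exI[of _ 1], simp, rule exI[of _ 0], rule exI[of _ 0], simp)
  then have "LA (\<lambda>t. 0) {} T" unfolding LA_def by simp
  then show ?case by auto
next
  case (insert k I)
  obtain S1 where "LA (f k) S1 T" using insert by blast
  moreover obtain S2 where "LA (\<lambda>t. \<Sum>k\<in>I. f k t) S2 T" using insert by blast
  ultimately have "LA (\<lambda>t. f k t + (\<Sum>k\<in>I. f k t)) (S1 \<union> S2) T" by (rule LA_add)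
  then show ?case using insert by auto
qed

lemma affine_closed:
  fixes f :: "real \<Rightarrow> real"
  assumes xy: "x < y" and cont: "continuous_on {x..y} f"
    and eq: "\<And>t. t \<in> {x<..<y} \<Longrightarrow> f t = a * t + b"
  shows "t \<in> {x..y} \<Longrightarrow> f t = a * t + b"
proof -
  have c2: "continuous_on {x..y} (\<lambda>t. a * t + b)" by (intro continuous_intros)
  have "closure {x<..<y} = {x..y}" using xy by simp
  assume "t \<in> {x..y}"
  have "{x<..<y} \<subseteq> {t \<in> {x..y}. f t = a * t + b}" using eq by auto
  moreover have "closed {t \<in> {x..y}. f t = a * t + b}"
  proof -
    have "closed ({x..y} \<inter> (\<lambda>t. f t - (a * t + b)) -` {0})"
      by (intro continuous_closed_preimage continuous_intros cont) auto?
    moreover have "{x..y} \<inter> (\<lambda>t. f t - (a * t + b)) -` {0} = {t \<in> {x..y}. f t = a * t + b}"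
      by auto
    ultimately show ?thesis by simp
  qed
  ultimately have "closure {x<..<y} \<subseteq> {t \<in> {x..y}. f t = a * t + b}"
    by (rule closure_minimal)
  then show "f t = a * t + b" using xy \<open>t \<in> {x..y}\<close> by auto
qed

lemma affine_open:
  fixes f :: "real \<Rightarrow> real"
  assumes xy: "x < y"
    and loc: "\<And>t. t \<in> {x<..<y} \<Longrightarrow> \<exists>\<delta>>0. \<exists>\<alpha> \<beta>. \<forall>t'. \<bar>t' - t\<bar> < \<delta> \<longrightarrow> f t' = \<alpha> * t' + \<beta>"
  shows "\<exists>\<alpha> \<beta>. \<forall>t\<in>{x<..<y}. f t = \<alpha> * t + \<beta>"
proof -
  define h where "h t = (deriv f t, f t - deriv f t * t)" for t
  have hloc: "\<exists>\<delta>>0. \<forall>t'. \<bar>t' - t\<bar> < \<delta> \<longrightarrow> h t' = h t" if t: "t \<in> {x<..<y}" for t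
  proof -
    obtain \<delta> \<alpha> \<beta> where d: "\<delta> > 0" "\<And>t'. \<bar>t' - t\<bar> < \<delta> \<Longrightarrow> f t' = \<alpha> * t' + \<beta>"
      using loc[OF t] by blast
    have "h t' = (\<alpha>, \<beta>)" if t': "\<bar>t' - t\<bar> < \<delta>" for t'
    proof -
      have "((\<lambda>s. \<alpha> * s + \<beta>) has_field_derivative \<alpha>) (at t')"
        by (auto intro!: derivative_eq_intros)
      then have "(f has_field_derivative \<alpha>) (at t')"
      proof (rule has_field_derivative_transform_within_open)
        show "open {s. \<bar>s - t\<bar> < \<delta>}"
          using open_ball[of t \<delta>] by (simp add: ball_def dist_real_def abs_minus_commute)
      qed (use t' d in auto)
      then have "deriv f t' = \<alpha>" by (rule DERIV_imp_deriv)
      then show ?thesis unfolding h_def using d(2)[OF t'] by simp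
    qed
    then show ?thesis using d(1) by (metis abs_zero diff_self)
  qed
  define t0 where "t0 = (x + y) / 2"
  have t0: "t0 \<in> {x<..<y}" unfolding t0_def using xy by auto
  have heq: "h t0 = h t" if t: "t \<in> {x<..<y}" for t
  proof (rule connected_local_const[where f = h])
    show "connected {x<..<y}" by simp
    show "t0 \<in> {x<..<y}" by (rule t0)
    show "t \<in> {x<..<y}" by (rule t)
    show "\<forall>a\<in>{x<..<y}. eventually (\<lambda>b. h a = h b) (at a within {x<..<y})"
    proof
      fix a assume a: "a \<in> {x<..<y}"
      obtain \<delta> where "\<delta> > 0" "\<forall>t'. \<bar>t' - a\<bar> < \<delta> \<longrightarrow> h t' = h a" using hloc[OF a] by blast
      then show "eventually (\<lambda>b. h a = h b) (at a within {x<..<y})"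
        unfolding eventually_at by (metis dist_real_def)
    qed
  qed
  have "f t = fst (h t0) * t + snd (h t0)" if "t \<in> {x<..<y}" for t
    using heq[OF that] unfolding h_def by auto
  then show ?thesis by blast
qed

lemma LA_PL:
  fixes f :: "real \<Rightarrow> real"
  assumes T: "T > 0" and cont: "continuous_on {0..T} f" and la: "LA f S T"
  shows "\<exists>ts::real list. ts \<noteq> [] \<and> sorted_wrt (<) ts \<and> hd ts = 0 \<and> last ts = T \<and>
        (\<forall>i < length ts - 1. \<exists>\<alpha> \<beta>. \<forall>x\<in>{ts ! i .. ts ! Suc i}. f x = \<alpha> * x + \<beta>)"
proof -
  have finS: "finite S" using la unfolding LA_def by auto
  define A where "A = insert 0 (insert T (S \<inter> {0..T}))"
  have finA: "finite A" unfolding A_def using finS by auto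
  define L where "L = sorted_list_of_set A"
  have setL: "set L = A" unfolding L_def using finA by simp
  have strict: "sorted_wrt (<) L" unfolding L_def by (rule strict_sorted_list_of_set)
  have sortedL: "sorted L" unfolding L_def by simp
  have A0T: "a \<in> A \<Longrightarrow> 0 \<le> a \<and> a \<le> T" for a unfolding A_def using T by auto
  have Lne: "L \<noteq> []" using setL unfolding A_def by auto
  then have len: "length L > 0" by simp
  have hd: "hd L = 0"
  proof -
    obtain k where k: "k < length L" "L ! k = 0" using setL unfolding A_def by (metis in_set_conv_nth insertI1)
    have "L ! 0 \<le> L ! k" using sortedL k by (intro sorted_nth_mono) auto
    moreover have "L ! 0 \<in> A" using setL len by (metis nth_mem)
    ultimately show ?thesis using A0T k Lne by (simp add: hd_conv_nth) (meson antisym)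
  qed
  have last: "last L = T"
  proof -
    obtain k where k: "k < length L" "L ! k = T" using setL unfolding A_def by (metis in_set_conv_nth insertI1 insertI2)
    have "L ! k \<le> L ! (length L - 1)" using sortedL k by (intro sorted_nth_mono) auto
    moreover have "L ! (length L - 1) \<in> A" using setL len by (metis nth_mem diff_less zero_less_one)
    ultimately show ?thesis using A0T k Lne by (simp add: last_conv_nth) (meson antisym)
  qed
  have pieces: "\<exists>\<alpha> \<beta>. \<forall>x\<in>{L ! i .. L ! Suc i}. f x = \<alpha> * x + \<beta>" if i: "i < length L - 1" for i
  proof -
    define x where "x = L ! i"
    define y where "y = L ! Suc i"
    have xy: "x < y" unfolding x_def y_def using sorted_wrt_nth_less[OF strict, of i "Suc i"] i by auto
    have xA: "x \<in> A" unfolding x_def using setL i by (metis nth_mem less_diff_conv less_imp_le_nat Suc_lessD add_lessD1)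
    have yA: "y \<in> A" unfolding y_def using setL i by (metis nth_mem less_diff_conv Suc_eq_plus1)
    have noS: "t \<notin> S" if t: "t \<in> {x<..<y}" for t
    proof
      assume "t \<in> S"
      then have "t \<in> A" using t A0T[OF xA] A0T[OF yA] unfolding A_def by auto
      then obtain k where k: "k < length L" "L ! k = t" using setL by (metis in_set_conv_nth)
      have "i < k"
      proof (rule ccontr)
        assume "\<not> i < k"
        then have "L ! k \<le> L ! i" using sortedL i by (intro sorted_nth_mono) auto
        then show False using t k unfolding x_def by auto
      qed
      moreover have "k < Suc i"
      proof (rule ccontr)
        assume "\<not> k < Suc i"
        then have "L ! Suc i \<le> L ! k" using sortedL k by (intro sorted_nth_mono) auto
        then show False using t k unfolding y_def by auto
      qed
      ultimately show False by simp
    qed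
    have "\<exists>\<alpha> \<beta>. \<forall>t\<in>{x<..<y}. f t = \<alpha> * t + \<beta>"
    proof (rule affine_open[OF xy])
      fix t assume t: "t \<in> {x<..<y}"
      have "t \<in> {0<..<T} - S" using t noS[OF t] A0T[OF xA] A0T[OF yA] by auto
      then show "\<exists>\<delta>>0. \<exists>\<alpha> \<beta>. \<forall>t'. \<bar>t' - t\<bar> < \<delta> \<longrightarrow> f t' = \<alpha> * t' + \<beta>"
        using la unfolding LA_def by blast
    qed
    then obtain \<alpha> \<beta> where ab: "\<forall>t\<in>{x<..<y}. f t = \<alpha> * t + \<beta>" by blast
    have "continuous_on {x..y} f"
      using A0T[OF xA] A0T[OF yA] by (intro continuous_on_subset[OF cont]) auto
    then have "\<forall>t\<in>{x..y}. f t = \<alpha> * t + \<beta>"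
      using affine_closed[OF xy _ ab[rule_format]] by blast
    then show ?thesis unfolding x_def y_def by blast
  qed
  show ?thesis using Lne strict hd last pieces by blast
qed



lemma enroute_eq:
  fixes v :: "nat \<Rightarrow> real"
  assumes le: "\<And>j. j \<ge> 1 \<Longrightarrow> a j \<le> arr j" and fin: "finite {j. 1 \<le> j \<and> a j \<le> t}"
  shows "enroute a arr v t = (\<Sum>j\<in>{j. 1 \<le> j \<and> a j \<le> t}. v j) - (\<Sum>j\<in>{j. 1 \<le> j \<and> arr j \<le> t}. v j)"
proof -
  have "{j. 1 \<le> j \<and> a j \<le> t \<and> t < arr j} = {j. 1 \<le> j \<and> a j \<le> t} - {j. 1 \<le> j \<and> arr j \<le> t}"
    by auto
  moreover have "{j. 1 \<le> j \<and> arr j \<le> t} \<subseteq> {j. 1 \<le> j \<and> a j \<le> t}"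
    using le by (auto intro: order_trans)
  ultimately show ?thesis unfolding enroute_def by (simp only: sum_diff[OF fin])
qed

lemma group_sum:
  fixes v :: "nat \<Rightarrow> real" and s :: nat and xi :: "nat \<Rightarrow> nat"
  assumes fin: "finite {j. 1 \<le> j \<and> P j}" and xi: "\<And>j. j \<ge> 1 \<Longrightarrow> xi j \<in> {1..s}"
  shows "(\<Sum>k\<in>{1..s}. \<Sum>j\<in>{j. 1 \<le> j \<and> xi j = k \<and> P j}. v j) = (\<Sum>j\<in>{j. 1 \<le> j \<and> P j}. v j)"
proof -
  have "(\<Sum>k\<in>{1..s}. \<Sum>j\<in>{x. x \<in> {j. 1 \<le> j \<and> P j} \<and> xi x = k}. v j) = (\<Sum>j\<in>{j. 1 \<le> j \<and> P j}. v j)"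
    using xi by (intro sum.group fin finite_atLeastAtMost) auto
  moreover have "{x. x \<in> {j. 1 \<le> j \<and> P j} \<and> xi x = k} = {j. 1 \<le> j \<and> xi j = k \<and> P j}" for k
    by auto
  ultimately show ?thesis by simp
qed

theorem proposition4:
  fixes n s b :: nat and lam :: real and mu :: "nat \<Rightarrow> real"
    and d :: "nat \<Rightarrow> nat \<Rightarrow> real" and z v :: "nat \<Rightarrow> real"
    and orig xi :: "nat \<Rightarrow> nat"
  assumes "n \<ge> 1" and "s \<ge> 2" and "b \<ge> 1" and "lam > 0"
    and "\<And>k. k \<in> {1..s} \<Longrightarrow> mu k > 0"
    and "\<And>k. k \<in> {1..<s} \<Longrightarrow> mu k \<le> mu (Suc k)"
    and "\<And>m k. m \<in> {1..b} \<Longrightarrow> k \<in> {1..s} \<Longrightarrow> d m k \<ge> 0"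
    and "\<And>i. z i \<ge> 0"
    and "filterlim (\<lambda>j. \<Sum>i\<in>{1..j}. z i) at_top sequentially"
    and "\<And>j. j \<ge> 1 \<Longrightarrow> orig j \<in> {1..b}"
    and "\<And>j. j \<ge> 1 \<Longrightarrow> xi j \<in> {1..s}"
    and "\<And>j. v j \<ge> 0"
  shows "continuous_on {0..} (Gamma n s lam mu z d orig xi v)
    \<and> piecewise_linear_nonneg (Gamma n s lam mu z d orig xi v)
    \<and> (\<forall>t\<ge>0. Gamma n s lam mu z d orig xi v t \<ge> 0)"
proof -
  note lam = assms(4) and mupos = assms(5) and dnn = assms(7) and znn = assms(8)
    and lim = assms(9) and origin = assms(10) and xin = assms(11) and vnn = assms(12)
  define ap where "ap = appear lam z"
  define darr where "darr = dist_arr n lam z d orig xi"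
  define marr where "marr = mdsp_arr n s lam z d orig"
  define M where "M = (\<Sum>k\<in>{1..s}. mu k)"
  have Mpos: "M > 0" unfolding M_def using mupos assms(2) by (intro sum_pos) auto
  have fin_ap: "finite {j. ap j \<le> t}" for t
  proof -
    have "eventually (\<lambda>j. lam * t < (\<Sum>i\<in>{1..j}. z i)) sequentially"
      using lim unfolding filterlim_at_top_dense by blast
    then obtain N where N: "\<And>j. j \<ge> N \<Longrightarrow> lam * t < (\<Sum>i\<in>{1..j}. z i)"
      unfolding eventually_sequentially by blast
    have "{j. ap j \<le> t} \<subseteq> {..<N}"
    proof
      fix j assume j: "j \<in> {j. ap j \<le> t}"
      show "j \<in> {..<N}"
      proof (rule ccontr)
        assume "j \<notin> {..<N}"
        then have "lam * t < (\<Sum>i\<in>{1..j}. z i)" using N by auto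
        then have "t < ap j" unfolding ap_def appear_def using lam by (simp add: field_simps)
        then show False using j by auto
      qed
    qed
    then show ?thesis by (rule finite_subset) auto
  qed
  have dmin_nn: "0 \<le> dmin s d (orig j)" and dmin_le: "dmin s d (orig j) \<le> d (orig j) (xi j)"
    if j: "j \<ge> 1" for j
  proof -
    have ne: "(\<lambda>l. d (orig j) l) ` {1..s} \<noteq> {}" using assms(2) by auto
    show "0 \<le> dmin s d (orig j)" unfolding dmin_def
      using ne origin[OF j] dnn by (subst Min_ge_iff) auto
    show "dmin s d (orig j) \<le> d (orig j) (xi j)" unfolding dmin_def
      using xin[OF j] by (intro Min_le) auto
  qed
  have ap_m: "ap j \<le> marr j" if "j \<ge> 1" for j
    unfolding ap_def marr_def mdsp_arr_def using dmin_nn[OF that] by auto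
  have m_d: "marr j \<le> darr j" if "j \<ge> 1" for j
    unfolding darr_def marr_def mdsp_arr_def dist_arr_def using dmin_le[OF that]
    by (auto intro: mult_left_mono)
  have finA: "finite {j. 1 \<le> j \<and> sel j \<and> arr j \<le> t}"
    if "\<And>j. j \<ge> 1 \<Longrightarrow> ap j \<le> arr j" for sel and arr :: "nat \<Rightarrow> real" and t
    by (rule finite_subset[OF _ fin_ap[of t]]) (use that in force)
  have finD: "finite {j. 1 \<le> j \<and> sel j \<and> darr j \<le> t}" for sel t
    using ap_m m_d by (intro finA) (meson order_trans)
  have finM: "finite {j. 1 \<le> j \<and> sel j \<and> marr j \<le> t}" for sel t
    using ap_m by (intro finA) auto
  have instD: "arrs (mu k) (\<lambda>j. xi j = k) darr v" if "k \<in> {1..s}" for k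
    using mupos[OF that] vnn finD by unfold_locales auto
  have instM: "arrs M (\<lambda>j. True) marr v"
    using Mpos vnn finM[of "\<lambda>j. True"] by unfold_locales auto
  define G where "G t = (\<Sum>k\<in>{1..s}. Kf (mu k) (\<lambda>j. xi j = k) darr v t) - Kf M (\<lambda>j. True) marr v t" for t
  have finE: "finite {j. 1 \<le> j \<and> ap j \<le> t}" for t
    by (rule finite_subset[OF _ fin_ap[of t]]) auto
  have Geq: "Gamma n s lam mu z d orig xi v t = G t" if t: "t \<ge> 0" for t
  proof -
    define E where "E = (\<Sum>j\<in>{j. 1 \<le> j \<and> ap j \<le> t}. v j)"
    define AD where "AD = (\<Sum>j\<in>{j. 1 \<le> j \<and> darr j \<le> t}. v j)"
    define AM where "AM = (\<Sum>j\<in>{j. 1 \<le> j \<and> marr j \<le> t}. v j)"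
    have WD: "W_dist n s lam mu z d orig xi v t =
      (\<Sum>k\<in>{1..s}. Aa (\<lambda>j. xi j = k) darr v t - mu k * t + Kf (mu k) (\<lambda>j. xi j = k) darr v t)"
      unfolding W_dist_def darr_def[symmetric]
      by (intro sum.cong refl arrs.workload_eq[OF instD t])
    have sumA: "(\<Sum>k\<in>{1..s}. Aa (\<lambda>j. xi j = k) darr v t) = AD"
      unfolding Aa_def AD_def using finD[of "\<lambda>j. True" t] xin
      by (intro group_sum) auto
    have UD: "U_dist n lam z d orig xi v t = E - AD"
      unfolding U_dist_def darr_def[symmetric] ap_def[symmetric] E_def AD_def
      using ap_m m_d finE by (intro enroute_eq) (auto intro: order_trans)
    have WM: "W_mdsp n s lam mu z d orig v t = AM - M * t + Kf M (\<lambda>j. True) marr v t"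
      unfolding W_mdsp_def marr_def[symmetric] M_def[symmetric] AM_def
      using arrs.workload_eq[OF instM t] by (simp add: Aa_def)
    have UM: "U_mdsp n s lam z d orig v t = E - AM"
      unfolding U_mdsp_def marr_def[symmetric] ap_def[symmetric] E_def AM_def
      using ap_m finE by (intro enroute_eq) auto
    have "(\<Sum>k\<in>{1..s}. Aa (\<lambda>j. xi j = k) darr v t - mu k * t + Kf (mu k) (\<lambda>j. xi j = k) darr v t)
      = (\<Sum>k\<in>{1..s}. Aa (\<lambda>j. xi j = k) darr v t) - M * t + (\<Sum>k\<in>{1..s}. Kf (mu k) (\<lambda>j. xi j = k) darr v t)"
      unfolding M_def by (simp add: sum.distrib sum_subtractf sum_distrib_right)
    then show ?thesis unfolding Gamma_def G_def using WD sumA UD WM UM by simp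
  qed
  define Gm where "Gm = Gamma n s lam mu z d orig xi v"
  have Gcont: "continuous_on {0..} G"
    unfolding G_def
    by (intro continuous_on_diff continuous_on_sum arrs.K_cont[OF instD] arrs.K_cont[OF instM]) auto
  have Gmcont: "continuous_on {0..} Gm"
    using Gcont Geq unfolding Gm_def by (subst continuous_on_cong[OF refl]) auto
  have nonneg: "G t \<ge> 0" if t: "t \<ge> 0" for t
  proof -
    have "Kf M (\<lambda>j. True) marr v t \<le> (\<Sum>k\<in>{1..s}. Kf (mu k) (\<lambda>j. xi j = k) darr v t)"
      unfolding Kf_def[of M]
    proof (rule cSUP_least)
      show "{0..t} \<noteq> {}" using t by auto
      fix u assume u: "u \<in> {0..t}"
      have finl: "finite {j. 1 \<le> j \<and> darr j < u}"
        by (rule finite_subset[OF _ finD[of "\<lambda>j. True" u]]) auto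
      have finlm: "finite {j. 1 \<le> j \<and> marr j < u}"
        by (rule finite_subset[OF _ finM[of "\<lambda>j. True" u]]) auto
      have "(\<Sum>k\<in>{1..s}. Fa (\<lambda>j. xi j = k) darr v u) = Fa (\<lambda>j. True) darr v u"
        unfolding Fa_def using group_sum[of "\<lambda>j. darr j < u", OF finl xin] by simp
      also have "\<dots> \<le> Fa (\<lambda>j. True) marr v u"
        unfolding Fa_def using finlm vnn m_d by (intro sum_mono2) (auto intro: order.strict_trans1)
      finally have Fle: "(\<Sum>k\<in>{1..s}. Fa (\<lambda>j. xi j = k) darr v u) \<le> Fa (\<lambda>j. True) marr v u" .
      have "M * u - Fa (\<lambda>j. True) marr v u \<le> (\<Sum>k\<in>{1..s}. mu k * u - Fa (\<lambda>j. xi j = k) darr v u)"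
        using Fle unfolding M_def by (simp add: sum_subtractf sum_distrib_right)
      also have "\<dots> \<le> (\<Sum>k\<in>{1..s}. Kf (mu k) (\<lambda>j. xi j = k) darr v t)"
        using u by (intro sum_mono arrs.K_lower[OF instD]) auto
      finally show "M * u - Fa (\<lambda>j. True) marr v u \<le> (\<Sum>k\<in>{1..s}. Kf (mu k) (\<lambda>j. xi j = k) darr v t)" .
    qed
    then show ?thesis unfolding G_def by simp
  qed
  have PL: "piecewise_linear_nonneg Gm"
    unfolding piecewise_linear_nonneg_def
  proof (intro allI impI)
    fix T :: real assume T: "T > 0"
    have "\<exists>S. LA (\<lambda>t. \<Sum>k\<in>{1..s}. Kf (mu k) (\<lambda>j. xi j = k) darr v t) S T"
      using arrs.K_LA[OF instD T] by (intro LA_sum) auto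
    then obtain S1 where S1: "LA (\<lambda>t. \<Sum>k\<in>{1..s}. Kf (mu k) (\<lambda>j. xi j = k) darr v t) S1 T" by blast
    obtain S2 where S2: "LA (Kf M (\<lambda>j. True) marr v) S2 T" using arrs.K_LA[OF instM T] by blast
    have "LA G (S1 \<union> S2) T"
      using LA_add[OF S1 LA_neg[OF S2]] unfolding G_def by simp
    then have LAG: "LA Gm (S1 \<union> S2) T"
      unfolding LA_def
    proof (elim conjE, intro conjI ballI)
      fix t assume fin: "finite (S1 \<union> S2)" and
        H: "\<forall>t\<in>{0<..<T} - (S1 \<union> S2). \<exists>\<delta>>0. \<exists>\<alpha> \<beta>. \<forall>t'. \<bar>t' - t\<bar> < \<delta> \<longrightarrow> G t' = \<alpha> * t' + \<beta>"
        and t: "t \<in> {0<..<T} - (S1 \<union> S2)"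
      obtain \<delta> \<alpha> \<beta> where d: "\<delta> > 0" "\<forall>t'. \<bar>t' - t\<bar> < \<delta> \<longrightarrow> G t' = \<alpha> * t' + \<beta>"
        using H t by blast
      have "\<forall>t'. \<bar>t' - t\<bar> < min \<delta> t \<longrightarrow> Gm t' = \<alpha> * t' + \<beta>"
        using d Geq unfolding Gm_def by auto
      moreover have "min \<delta> t > 0" using d t by auto
      ultimately show "\<exists>\<delta>>0. \<exists>\<alpha> \<beta>. \<forall>t'. \<bar>t' - t\<bar> < \<delta> \<longrightarrow> Gm t' = \<alpha> * t' + \<beta>" by blast
    qed
    have "continuous_on {0..T} Gm" by (rule continuous_on_subset[OF Gmcont]) auto
    then show "\<exists>ts::real list. ts \<noteq> [] \<and> sorted_wrt (<) ts \<and> hd ts = 0 \<and> last ts = T \<and>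
        (\<forall>i < length ts - 1. \<exists>\<alpha> \<beta>. \<forall>x\<in>{ts ! i .. ts ! Suc i}. Gm x = \<alpha> * x + \<beta>)"
      using LA_PL[OF T _ LAG] by blast
  qed
  show ?thesis using Gmcont PL nonneg Geq unfolding Gm_def by auto
qed

end
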